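(* Let $f_0, g_0 \in \mathbb{C}[z]$ be polynomials of equal length having nonzero constant coefficients. Let $\sigma_0,\sigma_1,\ldots$ be a sequence of values from $\{-1,1\}$, and define $f_n,g_n$ recursively for all $n \in \mathbb{N}$ by \[ f_{n+1}(z) = f_n(z)+\sigma_n z^{\operatorname{len} f_n} f_n^\dagger(-z), \qquad g_{n+1}(z) = g_n(z)+\sigma_n z^{\operatorname{len} g_n} g_n^\dagger(-z). \] Then for every $n\ge 0$, \begin{multline*} \frac{\|f_n g_n\|_2^2}{\|f_n\|_2^2\|g_n\|_2^2} = \frac{2 \|f_0 g_0\|_2^2+\|f_0 \widetilde{g}_0\|_2^2 + \operatorname{Re} \int f_0 \widetilde{f}_0 \overline{g_0 \widetilde{g}_0}}{3 \|f_0\|_2^2 \|g_0\|_2^2} \\ +\left(-\frac{1}{2}\right)^n \frac{\|f_0 g_0\|_2^2 -\|f_0 \widetilde{g}_0\|_2^2 - \operatorname{Re} \int f_0 \widetilde{f}_0 \overline{g_0 \widetilde{g}_0}}{3 \|f_0\|_2^2 \|g_0\|_2^2}. \end{multline*}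
   Context: For a polynomial $a(z)=a_0+\cdots+a_dz^d$ of degree $d$, $\operatorname{len} a=1+\deg a$ and $a^\dagger(z)=\overline{a_d}+\overline{a_{d-1}}z+\cdots+\overline{a_0}z^d$ (conjugate reciprocal); $f_n^\dagger(-z)$ means $f_n^\dagger$ evaluated at $-z$. For a Laurent polynomial $a(z)=\sum_j a_jz^j$: $\widetilde{a}(z)=a(-z)$, $\overline{a(z)}=\sum_j\overline{a_j}z^{-j}$, $\int a$ is the constant coefficient $a_0=\frac{1}{2\pi}\int_0^{2\pi}a(e^{i\theta})d\theta$, and $\|a\|_p=\left(\frac{1}{2\pi}\int_0^{2\pi}|a(e^{i\theta})|^pd\theta\right)^{1/p}$. *)

theory Defs
  imports "HOL-Analysis.Analysis" "HOL-Computational_Algebra.Polynomial"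
begin

definition plen :: "complex poly \<Rightarrow> nat" where
  "plen a = 1 + degree a"

definition dagger :: "complex poly \<Rightarrow> complex poly" where
  "dagger a = (\<Sum>k\<le>degree a. monom (cnj (coeff a (degree a - k))) k)"

definition tilde :: "complex poly \<Rightarrow> complex poly" where
  "tilde a = pcompose a [:0, -1:]"

primrec rseq :: "(nat \<Rightarrow> int) \<Rightarrow> complex poly \<Rightarrow> nat \<Rightarrow> complex poly" where
  "rseq \<sigma> h0 0 = h0"
| "rseq \<sigma> h0 (Suc n) =
     rseq \<sigma> h0 n + smult (of_int (\<sigma> n))
        (monom 1 (plen (rseq \<sigma> h0 n)) * tilde (dagger (rseq \<sigma> h0 n)))"

text \<open>For a Laurent polynomial this is its constant coefficient; conj of a Laurent
  polynomial on the unit circle is pointwise complex conjugation.\<close>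
definition circ_int :: "(complex \<Rightarrow> complex) \<Rightarrow> complex" where
  "circ_int F = integral {0..2*pi} (\<lambda>\<theta>. F (cis \<theta>)) / complex_of_real (2*pi)"

definition lpnorm :: "real \<Rightarrow> complex poly \<Rightarrow> real" where
  "lpnorm p a = (integral {0..2*pi} (\<lambda>\<theta>. cmod (poly a (cis \<theta>)) powr p) / (2*pi)) powr (1/p)"

end

theory Submission
  imports Defs
begin


lemma cont_int: fixes h :: "complex \<Rightarrow> complex" shows "continuous_on UNIV h \<Longrightarrow> (\<lambda>\<theta>. h (cis \<theta>)) integrable_on {a..b}"
proof -
  assume c: "continuous_on UNIV h"
  have "continuous_on {a..b} (\<lambda>\<theta>. h (cis \<theta>))"
    by (rule continuous_on_compose2[OF c]) (auto intro: continuous_intros)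
  then show ?thesis by (rule integrable_continuous_interval)
qed

lemma M_add: "continuous_on UNIV h \<Longrightarrow> continuous_on UNIV k \<Longrightarrow>
   circ_int (\<lambda>z. h z + k z) = circ_int h + circ_int k"
  unfolding circ_int_def by (simp add: integral_add cont_int add_divide_distrib)

lemma M_diff: "continuous_on UNIV h \<Longrightarrow> continuous_on UNIV k \<Longrightarrow>
   circ_int (\<lambda>z. h z - k z) = circ_int h - circ_int k"
  unfolding circ_int_def by (simp add: integral_diff cont_int diff_divide_distrib)

lemma M_cmult: "circ_int (\<lambda>z. c * h z) = c * circ_int h"
  unfolding circ_int_def by simp

lemma M_cnj: "circ_int (\<lambda>z. cnj (h z)) = cnj (circ_int h)"
  unfolding circ_int_def by (simp add: integral_cnj[symmetric])

lemma M_cong: "(\<And>z. cmod z = 1 \<Longrightarrow> h z = k z) \<Longrightarrow> circ_int h = circ_int k"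
  unfolding circ_int_def by simp

lemma M_neg: fixes h :: "complex \<Rightarrow> complex" assumes c: "continuous_on UNIV h"
  shows "circ_int (\<lambda>z. h (- z)) = circ_int h"
proof -
  define hc where "hc = (\<lambda>t. h (cis t))"
  have I: "\<And>a b. hc integrable_on {a..b}" unfolding hc_def using cont_int[OF c] .
  have "integral {0..2*pi} (\<lambda>\<theta>. h (- cis \<theta>)) = integral {0..2*pi} (hc \<circ> (+) pi)"
  proof (rule integral_cong)
    fix x have "cis (pi + x) = - cis x" by (simp add: complex_eq_iff)
    then show "h (- cis x) = (hc \<circ> (+) pi) x" by (simp add: hc_def)
  qed
  also have "\<dots> = integral {pi..3*pi} hc" by (simp add: integral_shift_Icc_real)
  also have "\<dots> = integral {pi..2*pi} hc + integral {2*pi..3*pi} hc"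
    using Henstock_Kurzweil_Integration.integral_combine[where a=pi and c="2*pi" and b="3*pi" and f=hc] I by simp
  also have "integral {2*pi..3*pi} hc = integral {0..pi} (hc \<circ> (+) (2*pi))"
    by (simp add: integral_shift_Icc_real)
  also have "\<dots> = integral {0..pi} hc"
  proof (rule integral_cong)
    fix x have "cis (2*pi + x) = cis x" by (simp add: complex_eq_iff cos_add sin_add)
    then show "(hc \<circ> (+) (2*pi)) x = hc x" by (simp add: hc_def)
  qed
  also have "integral {pi..2*pi} hc + integral {0..pi} hc = integral {0..2*pi} hc"
    using Henstock_Kurzweil_Integration.integral_combine[where a=0 and c="pi" and b="2*pi" and f=hc] by (simp add: I add.commute)
  finally show ?thesis unfolding circ_int_def hc_def by simp
qed




lemma cis_int_zero:
  fixes k :: int assumes "k \<noteq> 0"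
  shows "integral {0..2*pi} (\<lambda>\<theta>. cis (of_int k * \<theta>)) = 0"
proof -
  define F where "F = (\<lambda>\<theta>. cis (of_int k * \<theta>) * inverse (\<i> * of_int k))"
  have d: "(F has_vector_derivative cis (of_int k * x)) (at x within {0..2*pi})" for x
  proof -
    have "((\<lambda>\<theta>. cis (of_int k * \<theta>)) has_derivative (\<lambda>t. (of_int k * t) *\<^sub>R (\<i> * cis (of_int k * x)))) (at x within {0..2*pi})"
      by (intro has_derivative_cis derivative_intros)
    then have "((\<lambda>\<theta>. cis (of_int k * \<theta>) * inverse (\<i> * of_int k)) has_derivative (\<lambda>t. (of_int k * t) *\<^sub>R (\<i> * cis (of_int k * x)) * inverse (\<i> * of_int k))) (at x within {0..2*pi})"
      by (rule has_derivative_mult_left)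
    moreover have "(\<lambda>t. (of_int k * t) *\<^sub>R (\<i> * cis (of_int k * x)) * inverse (\<i> * of_int k)) = (\<lambda>t. t *\<^sub>R cis (of_int k * x))"
      using assms by (auto simp: scaleR_conv_of_real field_simps)
    ultimately show ?thesis unfolding has_vector_derivative_def F_def by simp
  qed
  have "((\<lambda>\<theta>. cis (of_int k * \<theta>)) has_integral (F (2*pi) - F 0)) {0..2*pi}"
    by (rule fundamental_theorem_of_calculus) (auto intro: d)
  moreover have "F (2*pi) = F 0"
  proof -
    have "cis (of_int k * (2*pi)) = 1"
      by (metis cis_multiple_2pi Ints_of_int mult.commute)
    then show ?thesis by (simp add: F_def)
  qed
  ultimately show ?thesis by (simp add: integral_unique)
qed

lemma M_poly_cnj_pow:
  fixes P :: "complex poly" assumes "degree P < m"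
  shows "circ_int (\<lambda>z. poly P z * cnj z ^ m) = 0"
proof -
  have pt: "poly P (cis \<theta>) * cnj (cis \<theta>) ^ m =
      (\<Sum>j\<le>degree P. coeff P j * cis (of_int (int j - int m) * \<theta>))" for \<theta>
  proof -
    have "poly P (cis \<theta>) * cnj (cis \<theta>) ^ m = (\<Sum>j\<le>degree P. coeff P j * (cis \<theta> ^ j * cnj (cis \<theta>) ^ m))"
      by (simp add: poly_altdef sum_distrib_right mult.assoc)
    also have "\<dots> = (\<Sum>j\<le>degree P. coeff P j * cis (of_int (int j - int m) * \<theta>))"
    proof (rule sum.cong[OF refl])
      fix j
      have "cis \<theta> ^ j * cnj (cis \<theta>) ^ m = cis (real j * \<theta>) * cis (- (real m * \<theta>))"
        using Complex.DeMoivre[of \<theta> j] Complex.DeMoivre[of "-\<theta>" m] by (simp add: cis_cnj)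
      also have "\<dots> = cis (of_int (int j - int m) * \<theta>)" by (simp add: cis_mult algebra_simps)
      finally show "coeff P j * (cis \<theta> ^ j * cnj (cis \<theta>) ^ m) = coeff P j * cis (of_int (int j - int m) * \<theta>)" by simp
    qed
    finally show ?thesis .
  qed
  have ci: "(\<lambda>\<theta>. c * cis (r * \<theta>)) integrable_on {0..2*pi}" for c r
    by (intro integrable_continuous_interval continuous_intros)
  have "integral {0..2*pi} (\<lambda>\<theta>. poly P (cis \<theta>) * cnj (cis \<theta>) ^ m) =
      (\<Sum>j\<le>degree P. integral {0..2*pi} (\<lambda>\<theta>. coeff P j * cis (of_int (int j - int m) * \<theta>)))"
    unfolding pt by (rule integral_sum) (auto intro: ci)
  also have "\<dots> = 0"
  proof (rule sum.neutral, rule ballI)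
    fix j assume "j \<in> {..degree P}"
    then have "int j - int m \<noteq> 0" using assms by auto
    then show "integral {0..2*pi} (\<lambda>\<theta>. coeff P j * cis (of_int (int j - int m) * \<theta>)) = 0"
      using cis_int_zero[of "int j - int m"] by (simp add: integral_mult_right)
  qed
  finally show ?thesis unfolding circ_int_def by simp
qed



lemma cneg: "continuous_on UNIV (f::complex\<Rightarrow>complex) \<Longrightarrow> continuous_on UNIV (\<lambda>z. f (- z))"
  by (rule continuous_on_compose2[of UNIV f]) (auto intro: continuous_intros)

lemma M_odd: fixes h :: "complex \<Rightarrow> complex"
  assumes c: "continuous_on UNIV h" and o: "\<And>z. h (- z) = - h z"
  shows "circ_int h = 0"
proof -
  have "circ_int h = circ_int (\<lambda>z. h (- z))" using M_neg[OF c] by simp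
  also have "\<dots> = circ_int (\<lambda>z. (-1) * h z)" using o by simp
  also have "\<dots> = - circ_int h" using M_cmult[of "-1" h] by simp
  finally show ?thesis by simp
qed

lemma alg_a:
  assumes "vv  *  ww = (1::complex)"
  shows "(f + vv  *  Fm)  *  (g + vv  *  Gm)  *  ((F + ww  *  fm)  *  (G + ww  *  gm)) =
     (f * g * (F * G) + f * gm * (F * Gm) + f * fm * (G * Gm) + F * Fm * (g * gm) + fm * g * (Fm * G) + fm * gm * (Fm * Gm))
     + f * fm * g * gm * ww ^ 2 + F * Fm * G * Gm * vv ^ 2
     + (ww  *  f  *  g  *  (F  *  gm + G  *  fm) + vv  *  (f  *  Gm + g  *  Fm)  *  F  *  G
        + ww  *  (f  *  Gm + g  *  Fm)  *  fm  *  gm + vv  *  Fm  *  Gm  *  (F  *  gm + G  *  fm))"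
  using assms by algebra


context
  fixes f g V :: "complex \<Rightarrow> complex"
  assumes cf: "continuous_on UNIV f" and cg: "continuous_on UNIV g" and cV: "continuous_on UNIV V"
   and Vneg: "\<And>z. V (- z) = - V z"
   and V1: "\<And>z. cmod z = 1 \<Longrightarrow> V z * cnj (V z) = 1"
   and K0: "circ_int (\<lambda>z. f z * f (- z) * g z * g (- z) * cnj (V z) ^ 2) = 0"
begin

lemmas cts = cf cg cV cneg[OF cf] cneg[OF cg] cneg[OF cV]

lemma K0': "circ_int (\<lambda>z. cnj (f z) * cnj (f (- z)) * cnj (g z) * cnj (g (- z)) * V z ^ 2) = 0"
  using M_cnj[of "\<lambda>z. f z * f (- z) * g z * g (- z) * cnj (V z) ^ 2"] K0 by simp

lemma step_a:
  "circ_int (\<lambda>z. (f z + V z * cnj (f (- z))) * (g z + V z * cnj (g (- z))) *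
        ((cnj (f z) + cnj (V z) * f (- z)) * (cnj (g z) + cnj (V z) * g (- z))))
   = circ_int (\<lambda>z. f z * g z * (cnj (f z) * cnj (g z)))
     + circ_int (\<lambda>z. f z * g (- z) * (cnj (f z) * cnj (g (- z))))
     + circ_int (\<lambda>z. f z * f (- z) * (cnj (g z) * cnj (g (- z))))
     + circ_int (\<lambda>z. cnj (f z) * cnj (f (- z)) * (g z * g (- z)))
     + circ_int (\<lambda>z. f (- z) * g z * (cnj (f (- z)) * cnj (g z)))
     + circ_int (\<lambda>z. f (- z) * g (- z) * (cnj (f (- z)) * cnj (g (- z))))"
  (is "circ_int ?E = ?R")
proof -
  define Od where "Od = (\<lambda>z. cnj (V z) * f z * g z * (cnj (f z) * g (- z) + cnj (g z) * f (- z)) + V z * (f z * cnj (g (- z)) + g z * cnj (f (- z))) * cnj (f z) * cnj (g z)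
        + cnj (V z) * (f z * cnj (g (- z)) + g z * cnj (f (- z))) * f (- z) * g (- z) + V z * cnj (f (- z)) * cnj (g (- z)) * (cnj (f z) * g (- z) + cnj (g z) * f (- z)))"
  have "circ_int ?E = circ_int (\<lambda>z. (f z * g z * (cnj (f z) * cnj (g z))
     + f z * g (- z) * (cnj (f z) * cnj (g (- z)))
     + f z * f (- z) * (cnj (g z) * cnj (g (- z)))
     + cnj (f z) * cnj (f (- z)) * (g z * g (- z))
     + f (- z) * g z * (cnj (f (- z)) * cnj (g z))
     + f (- z) * g (- z) * (cnj (f (- z)) * cnj (g (- z))))
     + f z * f (- z) * g z * g (- z) * cnj (V z) ^ 2
     + cnj (f z) * cnj (f (- z)) * cnj (g z) * cnj (g (- z)) * V z ^ 2
     + Od z)"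
    unfolding Od_def by (rule M_cong) (rule alg_a[OF V1])
  also have "\<dots> = ?R + circ_int (\<lambda>z. f z * f (- z) * g z * g (- z) * cnj (V z) ^ 2)
     + circ_int (\<lambda>z. cnj (f z) * cnj (f (- z)) * cnj (g z) * cnj (g (- z)) * V z ^ 2)
     + circ_int Od"
    unfolding Od_def by (simp add: M_add continuous_intros cts)
  also have "circ_int Od = 0"
  proof (rule M_odd)
    show "continuous_on UNIV Od" unfolding Od_def by (intro continuous_intros cts)
    show "Od (- z) = - Od z" for z unfolding Od_def by (simp add: Vneg algebra_simps)
  qed
  finally show ?thesis using K0 K0' by simp
qed


lemma step_n:
  "circ_int (\<lambda>z. (f z + V z * cnj (f (- z))) * (cnj (f z) + cnj (V z) * f (- z)))
   = circ_int (\<lambda>z. f z * cnj (f z)) + circ_int (\<lambda>z. f (- z) * cnj (f (- z)))"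
proof -
  define Od where "Od = (\<lambda>z. cnj (V z) * f z * f (- z) + V z * cnj (f z) * cnj (f (- z)))"
  have "circ_int (\<lambda>z. (f z + V z * cnj (f (- z))) * (cnj (f z) + cnj (V z) * f (- z)))
     = circ_int (\<lambda>z. f z * cnj (f z) + f (- z) * cnj (f (- z)) + Od z)"
    unfolding Od_def apply (rule M_cong) subgoal premises p for z using V1[OF p] by algebra done
  also have "\<dots> = circ_int (\<lambda>z. f z * cnj (f z)) + circ_int (\<lambda>z. f (- z) * cnj (f (- z))) + circ_int Od"
    unfolding Od_def by (simp add: M_add continuous_intros cts)
  also have "circ_int Od = 0"
  proof (rule M_odd)
    show "continuous_on UNIV Od" unfolding Od_def by (intro continuous_intros cts)
    show "Od (- z) = - Od z" for z unfolding Od_def by (simp add: Vneg algebra_simps)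
  qed
  finally show ?thesis by simp
qed

lemma step_b:
  "circ_int (\<lambda>z. (f z + V z * cnj (f (- z))) * (g (- z) - V z * cnj (g z)) *
        ((cnj (f z) + cnj (V z) * f (- z)) * (cnj (g (- z)) - cnj (V z) * g z)))
   = circ_int (\<lambda>z. f z * g (- z) * (cnj (f z) * cnj (g (- z))))
     + circ_int (\<lambda>z. f (- z) * g (- z) * (cnj (f (- z)) * cnj (g (- z))))
     - circ_int (\<lambda>z. cnj (f z) * cnj (f (- z)) * (g z * g (- z)))
     - circ_int (\<lambda>z. f z * f (- z) * (cnj (g z) * cnj (g (- z))))
     + circ_int (\<lambda>z. f z * g z * (cnj (f z) * cnj (g z)))
     + circ_int (\<lambda>z. f (- z) * g z * (cnj (f (- z)) * cnj (g z)))"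
  (is "circ_int ?E = ?R")
proof -
  define Od where "Od = (\<lambda>z. cnj (V z) * f z * g (- z) * (f (- z) * cnj (g (- z)) - cnj (f z) * g z)
      + V z * (cnj (f (- z)) * g (- z) - f z * cnj (g z)) * cnj (f z) * cnj (g (- z))
      - cnj (V z) * (cnj (f (- z)) * g (- z) - f z * cnj (g z)) * f (- z) * g z
      - V z * cnj (f (- z)) * cnj (g z) * (f (- z) * cnj (g (- z)) - cnj (f z) * g z))"
  have "circ_int ?E = circ_int (\<lambda>z. (f z * g (- z) * (cnj (f z) * cnj (g (- z)))
     + f (- z) * g (- z) * (cnj (f (- z)) * cnj (g (- z)))
     - cnj (f z) * cnj (f (- z)) * (g z * g (- z))
     - f z * f (- z) * (cnj (g z) * cnj (g (- z)))
     + f z * g z * (cnj (f z) * cnj (g z))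
     + f (- z) * g z * (cnj (f (- z)) * cnj (g z)))
     - f z * f (- z) * g z * g (- z) * cnj (V z) ^ 2
     - cnj (f z) * cnj (f (- z)) * cnj (g z) * cnj (g (- z)) * V z ^ 2
     + Od z)"
    unfolding Od_def apply (rule M_cong) subgoal premises p for z using V1[OF p] by algebra done
  also have "\<dots> = ?R - circ_int (\<lambda>z. f z * f (- z) * g z * g (- z) * cnj (V z) ^ 2)
     - circ_int (\<lambda>z. cnj (f z) * cnj (f (- z)) * cnj (g z) * cnj (g (- z)) * V z ^ 2)
     + circ_int Od"
    unfolding Od_def by (simp add: M_add M_diff continuous_intros cts)
  also have "circ_int Od = 0"
  proof (rule M_odd)
    show "continuous_on UNIV Od" unfolding Od_def by (intro continuous_intros cts)
    show "Od (- z) = - Od z" for z unfolding Od_def by (simp add: Vneg algebra_simps)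
  qed
  finally show ?thesis using K0 K0' by simp
qed

lemma step_c:
  "Re (circ_int (\<lambda>z. (f z + V z * cnj (f (- z))) * (f (- z) - V z * cnj (f z)) *
        ((cnj (g z) + cnj (V z) * g (- z)) * (cnj (g (- z)) - cnj (V z) * g z))))
   = Re (circ_int (\<lambda>z. f z * f (- z) * (cnj (g z) * cnj (g (- z))))
     + circ_int (\<lambda>z. f (- z) * g (- z) * (cnj (f (- z)) * cnj (g (- z))))
     - circ_int (\<lambda>z. f (- z) * g z * (cnj (f (- z)) * cnj (g z)))
     - circ_int (\<lambda>z. f z * g (- z) * (cnj (f z) * cnj (g (- z))))
     + circ_int (\<lambda>z. f z * g z * (cnj (f z) * cnj (g z)))
     + circ_int (\<lambda>z. cnj (f z) * cnj (f (- z)) * (g z * g (- z))))"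
  (is "Re (circ_int ?E) = Re ?R")
proof -
  define J1 where "J1 = (\<lambda>z. V z * (cnj (f (- z)) * f (- z) - f z * cnj (f z)) * (cnj (g z) * cnj (g (- z))))"
  define J2 where "J2 = (\<lambda>z. cnj (V z) * (f z * f (- z)) * (g (- z) * cnj (g (- z)) - g z * cnj (g z)))"
  have cJ1: "continuous_on UNIV J1" unfolding J1_def by (intro continuous_intros cts)
  have cJ2: "continuous_on UNIV J2" unfolding J2_def by (intro continuous_intros cts)
  have "circ_int ?E = circ_int (\<lambda>z. (f z * f (- z) * (cnj (g z) * cnj (g (- z)))
     + f (- z) * g (- z) * (cnj (f (- z)) * cnj (g (- z)))
     - f (- z) * g z * (cnj (f (- z)) * cnj (g z))
     - f z * g (- z) * (cnj (f z) * cnj (g (- z)))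
     + f z * g z * (cnj (f z) * cnj (g z))
     + cnj (f z) * cnj (f (- z)) * (g z * g (- z)))
     - f z * f (- z) * g z * g (- z) * cnj (V z) ^ 2
     - cnj (f z) * cnj (f (- z)) * cnj (g z) * cnj (g (- z)) * V z ^ 2
     + (J1 z - cnj (J1 z)) + (J2 z - cnj (J2 z)))"
    unfolding J1_def J2_def apply (rule M_cong)
    subgoal premises p for z using V1[OF p]
      by (simp only: complex_cnj_mult complex_cnj_diff complex_cnj_add complex_cnj_cnj) algebra
    done
  also have "\<dots> = ?R - circ_int (\<lambda>z. f z * f (- z) * g z * g (- z) * cnj (V z) ^ 2)
     - circ_int (\<lambda>z. cnj (f z) * cnj (f (- z)) * cnj (g z) * cnj (g (- z)) * V z ^ 2)
     + (circ_int J1 - circ_int (\<lambda>z. cnj (J1 z))) + (circ_int J2 - circ_int (\<lambda>z. cnj (J2 z)))"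
    using cJ1 cJ2 by (simp add: M_add M_diff continuous_intros cts)
  finally show ?thesis using K0 K0' by (simp add: M_cnj)
qed

end




lemma poly_dagger:
  assumes w: "cmod w = 1"
  shows "poly (dagger p) w = w ^ degree p * cnj (poly p w)"
proof -
  define d where "d = degree p"
  have ww: "w * cnj w = 1" using complex_norm_square[of w] w by simp
  have "poly (dagger p) w = (\<Sum>k\<le>d. cnj (coeff p (d - k)) * w ^ k)"
    by (simp add: dagger_def poly_sum poly_monom d_def)
  also have "\<dots> = (\<Sum>i\<le>d. cnj (coeff p (d - (d - i))) * w ^ (d - i))"
    using sum_diff_split[of 0 d "\<lambda>k. cnj (coeff p (d - k)) * w ^ k"] by simp
  also have "\<dots> = (\<Sum>i\<le>d. cnj (coeff p i) * (w ^ d * cnj w ^ i))"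
  proof (rule sum.cong[OF refl])
    fix i assume "i \<in> {..d}"
    then have i: "i \<le> d" by simp
    have "w ^ d * cnj w ^ i = w ^ (d - i) * (w * cnj w) ^ i"
      using i by (simp add: power_mult_distrib flip: power_add)
    then show "cnj (coeff p (d - (d - i))) * w ^ (d - i) = cnj (coeff p i) * (w ^ d * cnj w ^ i)"
      using i ww by simp
  qed
  also have "\<dots> = w ^ d * cnj (poly p w)"
    by (simp add: poly_altdef d_def sum_distrib_left mult_ac)
  finally show ?thesis by (simp add: d_def)
qed

lemma poly_tilde: "poly (tilde q) z = poly q (- z)"
  by (simp add: tilde_def poly_pcompose)

definition VV :: "int \<Rightarrow> complex poly \<Rightarrow> complex \<Rightarrow> complex" where
  "VV s H z = of_int s * z ^ plen H * (- z) ^ degree H"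

lemma rseq_step:
  assumes "cmod z = 1"
  shows "poly (rseq \<sigma> h (Suc n)) z = poly (rseq \<sigma> h n) z
     + VV (\<sigma> n) (rseq \<sigma> h n) z * cnj (poly (rseq \<sigma> h n) (- z))"
  using assms by (simp add: poly_tilde poly_dagger poly_monom VV_def)

lemma VV_neg: "VV s H (- z) = - VV s H z"
  unfolding VV_def plen_def by simp

lemma VV1: assumes "s \<in> {-1, 1}" "cmod z = 1" shows "VV s H z * cnj (VV s H z) = 1"
proof -
  have "cmod (of_int s :: complex) = 1" using assms(1) by auto
  then have "cmod (VV s H z) = 1" using assms(2) by (simp add: VV_def norm_mult norm_power)
  then show ?thesis using complex_norm_square[of "VV s H z"] by simp
qed
lemma VV_cnj_sq: assumes "s \<in> {-1, 1}"
  shows "cnj (VV s H z) ^ 2 = cnj z ^ (4 * degree H + 2)"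
proof -
  have s2: "(of_int s :: complex) ^ 2 = 1" using assms by auto
  have "cnj (VV s H z) ^ 2 = (of_int s) ^ 2 * (cnj z ^ plen H) ^ 2 * ((- cnj z) ^ degree H) ^ 2"
    by (simp add: VV_def power_mult_distrib)
  also have "((- cnj z) ^ degree H) ^ 2 = (cnj z ^ degree H) ^ 2"
  proof -
    have "((- cnj z) ^ degree H) ^ 2 = ((- cnj z) ^ 2) ^ degree H"
      by (metis power_mult mult.commute)
    also have "\<dots> = (cnj z ^ 2) ^ degree H" by simp
    also have "\<dots> = (cnj z ^ degree H) ^ 2" by (metis power_mult mult.commute)
    finally show ?thesis .
  qed
  also have "(of_int s) ^ 2 * (cnj z ^ plen H) ^ 2 * (cnj z ^ degree H) ^ 2 = cnj z ^ (4 * degree H + 2)"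
    unfolding s2 plen_def by (simp flip: power_mult power_add add: algebra_simps)
  finally show ?thesis .
qed

lemma coeff_dagger: "coeff (dagger p) k = (if k \<le> degree p then cnj (coeff p (degree p - k)) else 0)"
  by (simp add: dagger_def coeff_sum coeff_monom)

lemma degree_dagger: assumes "coeff p 0 \<noteq> 0" shows "degree (dagger p) = degree p"
proof (rule antisym)
  show "degree (dagger p) \<le> degree p" by (rule degree_le) (simp add: coeff_dagger)
  show "degree p \<le> degree (dagger p)" by (rule le_degree) (simp add: coeff_dagger assms)
qed

lemma tilde_dagger: assumes "coeff p 0 \<noteq> 0"
  shows "degree (tilde (dagger p)) = degree p" "tilde (dagger p) \<noteq> 0"
proof -
  show "degree (tilde (dagger p)) = degree p"
    by (simp add: tilde_def degree_pcompose degree_dagger assms)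
  have "lead_coeff (tilde (dagger p)) = lead_coeff (dagger p) * (-1) ^ degree (dagger p)"
    unfolding tilde_def by (subst lead_coeff_comp) auto
  moreover have "lead_coeff (dagger p) \<noteq> 0" using assms by (simp add: degree_dagger coeff_dagger)
  ultimately show "tilde (dagger p) \<noteq> 0" by auto
qed

lemma step_deg:
  fixes s :: int
  assumes "coeff p 0 \<noteq> 0" "s \<noteq> 0"
  defines "q \<equiv> p + smult (of_int s) (monom 1 (plen p) * tilde (dagger p))"
  shows "coeff q 0 = coeff p 0" "degree q = 2 * degree p + 1"
proof -
  show "coeff q 0 = coeff p 0" by (simp add: q_def coeff_monom_mult plen_def)
  have "degree (monom (1::complex) (plen p) * tilde (dagger p)) = plen p + degree p"
    using tilde_dagger[OF assms(1)] by (simp add: degree_mult_eq degree_monom_eq)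
  then have "degree (smult (of_int s) (monom (1::complex) (plen p) * tilde (dagger p))) = 2 * degree p + 1"
    using assms(2) by (simp add: plen_def)
  then show "degree q = 2 * degree p + 1" unfolding q_def
    by (subst degree_add_eq_right) auto
qed

lemma rseq_props:
  assumes "coeff h 0 \<noteq> 0" "\<And>k. \<sigma> k \<in> {-1, 1}"
  shows "coeff (rseq \<sigma> h n) 0 = coeff h 0 \<and> plen (rseq \<sigma> h n) = 2 ^ n * plen h"
proof (induction n)
  case 0 then show ?case by simp
next
  case (Suc n)
  have s: "\<sigma> n \<noteq> 0" using assms(2)[of n] by auto
  have c: "coeff (rseq \<sigma> h n) 0 \<noteq> 0" using Suc assms(1) by simp
  show ?case using step_deg[OF c s] Suc by (simp add: plen_def)
qed




definition Qa :: "complex poly \<Rightarrow> complex poly \<Rightarrow> complex" where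
  "Qa P Q = circ_int (\<lambda>z. poly P z * poly Q z * (cnj (poly P z) * cnj (poly Q z)))"
definition Qb :: "complex poly \<Rightarrow> complex poly \<Rightarrow> complex" where
  "Qb P Q = circ_int (\<lambda>z. poly P z * poly Q (- z) * (cnj (poly P z) * cnj (poly Q (- z))))"
definition Qc :: "complex poly \<Rightarrow> complex poly \<Rightarrow> complex" where
  "Qc P Q = circ_int (\<lambda>z. poly P z * poly P (- z) * (cnj (poly Q z) * cnj (poly Q (- z))))"
definition Qn :: "complex poly \<Rightarrow> complex" where
  "Qn P = circ_int (\<lambda>z. poly P z * cnj (poly P z))"

lemma cpoly: "continuous_on UNIV (poly (P::complex poly))"
  using continuous_on_poly[of UNIV "\<lambda>x. x" P] by (simp add: continuous_on_id)

lemma recur: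
  fixes P Q P' Q' :: "complex poly" and V :: "complex \<Rightarrow> complex"
  assumes cV: "continuous_on UNIV V"
   and Vneg: "\<And>z. V (- z) = - V z"
   and V1: "\<And>z. cmod z = 1 \<Longrightarrow> V z * cnj (V z) = 1"
   and K0: "circ_int (\<lambda>z. poly P z * poly P (- z) * poly Q z * poly Q (- z) * cnj (V z) ^ 2) = 0"
   and hP: "\<And>z. cmod z = 1 \<Longrightarrow> poly P' z = poly P z + V z * cnj (poly P (- z))"
   and hQ: "\<And>z. cmod z = 1 \<Longrightarrow> poly Q' z = poly Q z + V z * cnj (poly Q (- z))"
  shows "Re (Qa P' Q') = 2 * Re (Qa P Q) + 2 * Re (Qb P Q) + 2 * Re (Qc P Q)"
    "Re (Qb P' Q') + Re (Qc P' Q') = 4 * Re (Qa P Q)"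
    "Re (Qn P') = 2 * Re (Qn P)" "Re (Qn Q') = 2 * Re (Qn Q)"
proof -
  have hPm: "poly P' (- z) = poly P (- z) - V z * cnj (poly P z)" if "cmod z = 1" for z
    using hP[of "- z"] that Vneg[of z] by simp
  have hQm: "poly Q' (- z) = poly Q (- z) - V z * cnj (poly Q z)" if "cmod z = 1" for z
    using hQ[of "- z"] that Vneg[of z] by simp
  have K0': "circ_int (\<lambda>z. poly Q z * poly Q (- z) * poly P z * poly P (- z) * cnj (V z) ^ 2) = 0"
    using K0 by (simp add: mult_ac)
  note sa = step_a[OF cpoly cpoly cV Vneg V1 K0]
  note sb = step_b[OF cpoly cpoly cV Vneg V1 K0]
  note sc = step_c[OF cpoly cpoly cV Vneg V1 K0]
  note snP = step_n[OF cpoly cpoly cV Vneg V1 K0]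
  note snQ = step_n[OF cpoly cpoly cV Vneg V1 K0']
  have na: "circ_int (\<lambda>z. poly P (- z) * poly Q (- z) * (cnj (poly P (- z)) * cnj (poly Q (- z)))) = Qa P Q"
    unfolding Qa_def using M_neg[of "\<lambda>z. poly P z * poly Q z * (cnj (poly P z) * cnj (poly Q z))"]
    by (simp add: continuous_intros cpoly)
  have nb: "circ_int (\<lambda>z. poly P (- z) * poly Q z * (cnj (poly P (- z)) * cnj (poly Q z))) = Qb P Q"
    unfolding Qb_def using M_neg[of "\<lambda>z. poly P z * poly Q (- z) * (cnj (poly P z) * cnj (poly Q (- z)))"]
    by (simp add: continuous_intros cpoly cneg)
  have nc: "circ_int (\<lambda>z. cnj (poly P z) * cnj (poly P (- z)) * (poly Q z * poly Q (- z))) = cnj (Qc P Q)"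
    unfolding Qc_def using M_cnj[of "\<lambda>z. poly P z * poly P (- z) * (cnj (poly Q z) * cnj (poly Q (- z)))"]
    by simp
  have nnP: "circ_int (\<lambda>z. poly P (- z) * cnj (poly P (- z))) = Qn P"
    unfolding Qn_def using M_neg[of "\<lambda>z. poly P z * cnj (poly P z)"] by (simp add: continuous_intros cpoly)
  have nnQ: "circ_int (\<lambda>z. poly Q (- z) * cnj (poly Q (- z))) = Qn Q"
    unfolding Qn_def using M_neg[of "\<lambda>z. poly Q z * cnj (poly Q z)"] by (simp add: continuous_intros cpoly)
  have "Qa P' Q' = circ_int (\<lambda>z. (poly P z + V z * cnj (poly P (- z))) * (poly Q z + V z * cnj (poly Q (- z))) *
        ((cnj (poly P z) + cnj (V z) * poly P (- z)) * (cnj (poly Q z) + cnj (V z) * poly Q (- z))))"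
    unfolding Qa_def by (rule M_cong) (simp add: hP hQ)
  then show "Re (Qa P' Q') = 2 * Re (Qa P Q) + 2 * Re (Qb P Q) + 2 * Re (Qc P Q)"
    using sa na nb nc by (simp add: Qa_def Qb_def Qc_def)
  have "Qb P' Q' = circ_int (\<lambda>z. (poly P z + V z * cnj (poly P (- z))) * (poly Q (- z) - V z * cnj (poly Q z)) *
        ((cnj (poly P z) + cnj (V z) * poly P (- z)) * (cnj (poly Q (- z)) - cnj (V z) * poly Q z)))"
    unfolding Qb_def by (rule M_cong) (simp add: hP hQm Vneg)
  moreover have "Re (Qc P' Q') = Re (circ_int (\<lambda>z. (poly P z + V z * cnj (poly P (- z))) * (poly P (- z) - V z * cnj (poly P z)) *
        ((cnj (poly Q z) + cnj (V z) * poly Q (- z)) * (cnj (poly Q (- z)) - cnj (V z) * poly Q z))))"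
    unfolding Qc_def by (rule arg_cong[where f=Re], rule M_cong) (simp add: hP hQ hPm hQm Vneg)
  ultimately show "Re (Qb P' Q') + Re (Qc P' Q') = 4 * Re (Qa P Q)"
    using sb sc na nb nc by (simp add: Qa_def Qb_def Qc_def)
  have "Qn P' = circ_int (\<lambda>z. (poly P z + V z * cnj (poly P (- z))) * (cnj (poly P z) + cnj (V z) * poly P (- z)))"
    unfolding Qn_def by (rule M_cong) (simp add: hP)
  then show "Re (Qn P') = 2 * Re (Qn P)" using snP nnP by (simp add: Qn_def)
  have "Qn Q' = circ_int (\<lambda>z. (poly Q z + V z * cnj (poly Q (- z))) * (cnj (poly Q z) + cnj (V z) * poly Q (- z)))"
    unfolding Qn_def by (rule M_cong) (simp add: hQ)
  then show "Re (Qn Q') = 2 * Re (Qn Q)" using snQ nnQ by (simp add: Qn_def)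
qed




lemma lpnorm_Qn: "(lpnorm 2 P)\<^sup>2 = Re (Qn P)"
proof -
  define r where "r = (\<lambda>\<theta>. (cmod (poly P (cis \<theta>)))\<^sup>2)"
  have cr: "continuous_on {0..2*pi} (\<lambda>\<theta>. poly P (cis \<theta>))"
    by (intro continuous_on_poly continuous_intros)
  have ri: "r integrable_on {0..2*pi}" unfolding r_def
    by (intro integrable_continuous_interval continuous_intros cr)
  define I where "I = integral {0..2*pi} r"
  have I0: "0 \<le> I" unfolding I_def by (rule integral_nonneg[OF ri]) (simp add: r_def)
  have "lpnorm 2 P = (I / (2*pi)) powr (1/2)"
    unfolding lpnorm_def I_def r_def by simp
  then have l: "(lpnorm 2 P)\<^sup>2 = I / (2*pi)"
    using I0 by (simp add: powr_half_sqrt)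
  have "integral {0..2*pi} (\<lambda>\<theta>. poly P (cis \<theta>) * cnj (poly P (cis \<theta>))) = integral {0..2*pi} (\<lambda>\<theta>. complex_of_real (r \<theta>))"
    unfolding r_def by (simp only: complex_norm_square)
  also have "\<dots> = complex_of_real I"
    unfolding I_def by (rule integral_unique[OF has_integral_of_real[OF integrable_integral[OF ri]]])
  finally have "Qn P = complex_of_real I / complex_of_real (2*pi)"
    unfolding Qn_def circ_int_def by simp
  then have "Re (Qn P) = I / (2*pi)" by (simp add: Re_divide_of_real)
  then show ?thesis using l by simp
qed

lemma Qn_mult: "Qn (P * Q) = Qa P Q"
  unfolding Qn_def Qa_def by (simp add: mult_ac)

lemma Qn_mult_tilde: "Qn (P * tilde Q) = Qb P Q"
  unfolding Qn_def Qb_def by (simp add: mult_ac poly_tilde)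

lemma Qc_eq: "circ_int (\<lambda>z. poly (P * tilde P) z * cnj (poly (Q * tilde Q) z)) = Qc P Q"
  unfolding Qc_def by (simp add: poly_tilde)

lemma degree_tilde: "degree (tilde p) = degree p"
  by (simp add: tilde_def degree_pcompose)


lemma main_recur:
  fixes f0 g0 :: "complex poly" and \<sigma> :: "nat \<Rightarrow> int" and n :: nat
  assumes pl: "plen f0 = plen g0"
    and f00: "coeff f0 0 \<noteq> 0" and g00: "coeff g0 0 \<noteq> 0"
    and sg: "\<And>k. \<sigma> k \<in> {-1, 1}"
  defines "P \<equiv> rseq \<sigma> f0 n" and "Q \<equiv> rseq \<sigma> g0 n"
  shows "Re (Qa (rseq \<sigma> f0 (Suc n)) (rseq \<sigma> g0 (Suc n))) = 2 * Re (Qa P Q) + 2 * Re (Qb P Q) + 2 * Re (Qc P Q)"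
    "Re (Qb (rseq \<sigma> f0 (Suc n)) (rseq \<sigma> g0 (Suc n))) + Re (Qc (rseq \<sigma> f0 (Suc n)) (rseq \<sigma> g0 (Suc n))) = 4 * Re (Qa P Q)"
    "Re (Qn (rseq \<sigma> f0 (Suc n))) = 2 * Re (Qn P)" "Re (Qn (rseq \<sigma> g0 (Suc n))) = 2 * Re (Qn Q)"
proof -
  have pf: "coeff P 0 \<noteq> 0 \<and> plen P = 2 ^ n * plen f0" using rseq_props[OF f00 sg] f00 P_def by simp
  have pg: "coeff Q 0 \<noteq> 0 \<and> plen Q = 2 ^ n * plen g0" using rseq_props[OF g00 sg] g00 Q_def by simp
  have plPQ: "plen P = plen Q" using pf pg pl by simp
  then have dPQ: "degree P = degree Q" by (simp add: plen_def)
  define V where "V = VV (\<sigma> n) P"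
  have VQ: "VV (\<sigma> n) Q = V" unfolding V_def VV_def using plPQ dPQ by simp
  have cV: "continuous_on UNIV V" unfolding V_def VV_def by (intro continuous_intros)
  have Vneg: "\<And>z. V (- z) = - V z" unfolding V_def by (rule VV_neg)
  have V1: "\<And>z. cmod z = 1 \<Longrightarrow> V z * cnj (V z) = 1" unfolding V_def by (rule VV1[OF sg])
  have K0: "circ_int (\<lambda>z. poly P z * poly P (- z) * poly Q z * poly Q (- z) * cnj (V z) ^ 2) = 0"
  proof -
    have "circ_int (\<lambda>z. poly P z * poly P (- z) * poly Q z * poly Q (- z) * cnj (V z) ^ 2)
       = circ_int (\<lambda>z. poly (P * tilde P * Q * tilde Q) z * cnj z ^ (4 * degree P + 2))"
      unfolding V_def by (rule M_cong) (simp add: VV_cnj_sq[OF sg] poly_tilde)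
    also have "\<dots> = 0"
    proof (rule M_poly_cnj_pow)
      have "degree (P * tilde P * Q * tilde Q) \<le> degree P + degree (tilde P) + degree Q + degree (tilde Q)"
        by (meson add_le_mono degree_mult_le order_refl order_trans)
      then show "degree (P * tilde P * Q * tilde Q) < 4 * degree P + 2"
        using dPQ by (simp add: degree_tilde)
    qed
    finally show ?thesis .
  qed
  have hP: "\<And>z. cmod z = 1 \<Longrightarrow> poly (rseq \<sigma> f0 (Suc n)) z = poly P z + V z * cnj (poly P (- z))"
    unfolding V_def P_def by (rule rseq_step)
  have hQ: "\<And>z. cmod z = 1 \<Longrightarrow> poly (rseq \<sigma> g0 (Suc n)) z = poly Q z + V z * cnj (poly Q (- z))"
    unfolding VQ[symmetric] Q_def by (rule rseq_step)
  note r = recur[OF cV Vneg V1 K0 hP hQ]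
  show "Re (Qa (rseq \<sigma> f0 (Suc n)) (rseq \<sigma> g0 (Suc n))) = 2 * Re (Qa P Q) + 2 * Re (Qb P Q) + 2 * Re (Qc P Q)"
    "Re (Qb (rseq \<sigma> f0 (Suc n)) (rseq \<sigma> g0 (Suc n))) + Re (Qc (rseq \<sigma> f0 (Suc n)) (rseq \<sigma> g0 (Suc n))) = 4 * Re (Qa P Q)"
    "Re (Qn (rseq \<sigma> f0 (Suc n))) = 2 * Re (Qn P)" "Re (Qn (rseq \<sigma> g0 (Suc n))) = 2 * Re (Qn Q)"
    using r by auto
qed

theorem theorem2p4:
  fixes f0 g0 :: "complex poly" and \<sigma> :: "nat \<Rightarrow> int" and n :: nat
  assumes "plen f0 = plen g0"
    and "coeff f0 0 \<noteq> 0" and "coeff g0 0 \<noteq> 0"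
    and "\<And>k. \<sigma> k \<in> {-1, 1}"
  shows "(lpnorm 2 (rseq \<sigma> f0 n * rseq \<sigma> g0 n))\<^sup>2
           / ((lpnorm 2 (rseq \<sigma> f0 n))\<^sup>2 * (lpnorm 2 (rseq \<sigma> g0 n))\<^sup>2)
         = (2 * (lpnorm 2 (f0 * g0))\<^sup>2 + (lpnorm 2 (f0 * tilde g0))\<^sup>2
              + Re (circ_int (\<lambda>z. poly (f0 * tilde f0) z * cnj (poly (g0 * tilde g0) z))))
             / (3 * (lpnorm 2 f0)\<^sup>2 * (lpnorm 2 g0)\<^sup>2)
           + (- 1 / 2) ^ n *
             (((lpnorm 2 (f0 * g0))\<^sup>2 - (lpnorm 2 (f0 * tilde g0))\<^sup>2
              - Re (circ_int (\<lambda>z. poly (f0 * tilde f0) z * cnj (poly (g0 * tilde g0) z))))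
             / (3 * (lpnorm 2 f0)\<^sup>2 * (lpnorm 2 g0)\<^sup>2))"
proof -
  define a where "a = (\<lambda>k. Re (Qa (rseq \<sigma> f0 k) (rseq \<sigma> g0 k)))"
  define s where "s = (\<lambda>k. Re (Qb (rseq \<sigma> f0 k) (rseq \<sigma> g0 k)) + Re (Qc (rseq \<sigma> f0 k) (rseq \<sigma> g0 k)))"
  define nf where "nf = (\<lambda>k. Re (Qn (rseq \<sigma> f0 k)))"
  define ng where "ng = (\<lambda>k. Re (Qn (rseq \<sigma> g0 k)))"
  note mr = main_recur[OF assms]
  have ind: "2 * a k + s k = 4 ^ k * (2 * a 0 + s 0) \<and> a k - s k = (-2) ^ k * (a 0 - s 0)
      \<and> nf k = 2 ^ k * nf 0 \<and> ng k = 2 ^ k * ng 0" for k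
  proof (induction k)
    case 0 then show ?case by simp
  next
    case (Suc k)
    have e1: "a (Suc k) = 2 * a k + 2 * s k" using main_recur(1)[of f0 g0 \<sigma> k, OF assms] unfolding a_def s_def by simp
    have e2: "s (Suc k) = 4 * a k" using main_recur(2)[of f0 g0 \<sigma> k, OF assms] unfolding a_def s_def by simp
    have e3: "nf (Suc k) = 2 * nf k" using main_recur(3)[of f0 g0 \<sigma> k, OF assms] unfolding nf_def by simp
    have e4: "ng (Suc k) = 2 * ng k" using main_recur(4)[of f0 g0 \<sigma> k, OF assms] unfolding ng_def by simp
    show ?case using Suc e1 e2 e3 e4 by (simp add: algebra_simps)
  qed
  define N where "N = nf 0 * ng 0"
  have an: "a n = (4 ^ n * (2 * a 0 + s 0) + (-2) ^ n * (a 0 - s 0)) / 3" using ind[of n] by simp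
  have nn: "nf n * ng n = 4 ^ n * N" using ind[of n] unfolding N_def by (simp add: power_mult_distrib[symmetric] algebra_simps)
  have h: "(-1/2 :: real) ^ n = (-2) ^ n / 4 ^ n" by (simp add: power_divide[symmetric])
  have goal: "a n / (nf n * ng n) = (2 * a 0 + s 0) / (3 * N) + (-1/2) ^ n * ((a 0 - s 0) / (3 * N))"
  proof (cases "N = 0")
    case True then show ?thesis using nn by simp
  next
    case False
    have "(4::real) ^ n \<noteq> 0" by simp
    then show ?thesis unfolding nn an h using False by (simp add: field_simps)
  qed
  show ?thesis
    unfolding lpnorm_Qn Qn_mult_tilde Qc_eq
    unfolding Qn_mult
    using goal unfolding a_def s_def nf_def ng_def N_def
    by (simp add: algebra_simps)
qed


end
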